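(* Let $O,A,B$ be three pairwise distinct points of the plane, $\vec\alpha=\overrightarrow{AO}/OA$, $\vec\beta=\overrightarrow{OB}/OB$, with oriented angle $\Omega=(\widehat{\vec\alpha,\vec\beta})\in\,]0,\pi[$. Let $p\ge2$, $\theta_0=\Omega/p$, and let $\mathcal{E}_p$ be the set of curves in $\mathcal{E}$ consisting of $p$ consecutive arcs of circle of radii $R_0,\dots,R_{p-1}>0$, each turning counterclockwise by the angle $\theta_0$, starting at $A$ with tangent $\vec\alpha$; identify such a curve with $R=(R_0,\dots,R_{p-1})\in(\mathbb{R}_+^* )^p$, so that $\mathcal{E}_p=\{R\in(\mathbb{R}_+^* )^p:\mathcal{A}R=\mathcal{B}\}$ with $\mathcal{A},\mathcal{B}$ as in the context. If $\mathcal{E}_p$ is nonempty, then there exists $X\in\mathcal{E}_p$ minimizing the maximum of the curvature: $$\big\|\,\|X''\|\,\big\|_{L^\infty(0,L(X))}=\min_{Z\in\mathcal{E}_p}\big\|\,\|Z''\|\,\big\|_{L^\infty(0,L(Z))}.$$ Setting $F(X)=\min_{1\le k\le p}X_k$ for $X=(X_1,\dots,X_p)\in\mathbb{R}_+^p$, this problem is equivalent to $$F(X)=\max_{Z\in(\mathbb{R}_+^* )^p,\ \mathcal{A}Z=\mathcal{B}}F(Z),$$ which admits a solution as soon as there exists $X^0\in(\mathbb{R}_+^* )^p$ with $\mathcal{A}X^0=\mathcal{B}$.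
   Context: $\mathcal{E}$ is the set of curves $X:[0,L]\to\mathbb{R}^2$ ($L>0$), $X\in W^{2,\infty}(0,L;\mathbb{R}^2)$, with $\|X'(s)\|=1$, $X(0)=A$, $X(L)=B$, $X'(0)=\vec\alpha$, $X'(L)=\vec\beta$, and nondecreasing continuous angle $\phi(s)=(\widehat{\vec\alpha,X'(s)})$. Identifying the plane with $\mathbb{C}$ via the orthonormal frame with origin $A$ and first axis $\vec\alpha$, with $b$ the affix of $B$: $\mathcal{A}\in\mathcal{M}_{2,p}(\mathbb{R})$ has entries $\mathcal{A}_{1,k}=\operatorname{Re}(i(1-e^{i\theta_0})e^{i(k-1)\theta_0})$, $\mathcal{A}_{2,k}=\operatorname{Im}(i(1-e^{i\theta_0})e^{i(k-1)\theta_0})$, and $\mathcal{B}=(\operatorname{Re}b,\operatorname{Im}b)^T$. $\|\,\|X''\|\,\|_{L^\infty}$ is the essential supremum of $\|X''\|$. *)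

theory Defs
  imports "HOL-Analysis.Analysis" "HOL-Probability.Essential_Supremum"
begin

text \<open>Frame: origin A, first axis the unit vector alpha (a unit complex number).
  A point P of the plane has affix (P - A) / alpha in this frame.\<close>

definition unit_dir :: "complex \<Rightarrow> complex \<Rightarrow> complex" where
  "unit_dir P Q = (Q - P) / complex_of_real (cmod (Q - P))"

text \<open>Column k (0-based; column k+1 of the paper) of the matrix A, as a complex number:
  its real part is the first row entry, its imaginary part the second row entry.\<close>
definition colA :: "real \<Rightarrow> nat \<Rightarrow> complex" where
  "colA \<theta>0 k = \<i> * (1 - exp (\<i> * of_real \<theta>0)) * exp (\<i> * of_real (real k * \<theta>0))"

definition Ep :: "nat \<Rightarrow> real \<Rightarrow> complex \<Rightarrow> (nat \<Rightarrow> real) set" where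
  "Ep p \<theta>0 b = {R. (\<forall>k<p. 0 < R k)
      \<and> (\<Sum>k<p. R k * Re (colA \<theta>0 k)) = Re b
      \<and> (\<Sum>k<p. R k * Im (colA \<theta>0 k)) = Im b}"

definition arcs_len :: "nat \<Rightarrow> real \<Rightarrow> (nat \<Rightarrow> real) \<Rightarrow> real" where
  "arcs_len p \<theta>0 R = \<theta>0 * (\<Sum>k<p. R k)"

text \<open>Arc-length parametrisation, in frame coordinates, of the curve made of p consecutive
  counterclockwise arcs of radii R k turning by theta0, starting at 0 with tangent 1.
  At arc length s, the k-th arc has turned by the clipped angle
  max 0 (min theta0 ((s - theta0 * sum_{j<k} R j) / R k)).\<close>
definition arcs_frame :: "nat \<Rightarrow> real \<Rightarrow> (nat \<Rightarrow> real) \<Rightarrow> real \<Rightarrow> complex" where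
  "arcs_frame p \<theta>0 R s = (\<Sum>k<p.
      complex_of_real (R k) * (- \<i>) *
        (exp (\<i> * of_real (real k * \<theta>0
                + max 0 (min \<theta>0 ((s - \<theta>0 * (\<Sum>j<k. R j)) / R k))))
         - exp (\<i> * of_real (real k * \<theta>0))))"

definition arcs_curve :: "complex \<Rightarrow> complex \<Rightarrow> nat \<Rightarrow> real \<Rightarrow> (nat \<Rightarrow> real) \<Rightarrow> real \<Rightarrow> complex" where
  "arcs_curve A \<alpha> p \<theta>0 R s = A + \<alpha> * arcs_frame p \<theta>0 R s"

definition Linf_curv :: "real \<Rightarrow> (real \<Rightarrow> complex) \<Rightarrow> ereal" where
  "Linf_curv L X = esssup (lebesgue_on {0..L})
     (\<lambda>s. ereal (norm (vector_derivative (\<lambda>t. vector_derivative X (at t)) (at s))))"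

definition Fmin :: "nat \<Rightarrow> (nat \<Rightarrow> real) \<Rightarrow> real" where
  "Fmin p R = Min (R ` {..<p})"

end

theory Submission
  imports Defs
begin


lemma colA_cis: "colA \<theta>0 k = \<i> * (1 - cis \<theta>0) * cis (real k * \<theta>0)"
  by (simp add: colA_def cis_conv_exp)

lemma Im_colA_pos:
  assumes "0 < \<theta>0" "real (Suc k) * \<theta>0 < pi"
  shows "0 < Im (colA \<theta>0 k)"
proof -
  have e: "Im (colA \<theta>0 k) = cos (real k * \<theta>0) - cos (real (Suc k) * \<theta>0)"
    by (simp add: colA_cis algebra_simps cos_add)
  have "cos (real (Suc k) * \<theta>0) < cos (real k * \<theta>0)"
    using assms by (intro cos_monotone_0_pi) (auto simp: algebra_simps)
  then show ?thesis using e by simp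
qed

lemma Fmin_cont: "1 \<le> p \<Longrightarrow> continuous_on UNIV (Fmin p)"
proof (induction p rule: dec_induct)
  case base
  then show ?case by (simp add: Fmin_def lessThan_Suc)
next
  case (step n)
  have "Fmin (Suc n) = (\<lambda>R. min (R n) (Fmin n R))"
    using step by (auto simp: Fmin_def lessThan_Suc lessThan_empty_iff intro!: ext Min_insert)
  then show ?case using step by (auto intro!: continuous_intros)
qed

lemma lin_cont: "continuous_on UNIV (\<lambda>R::nat\<Rightarrow>real. \<Sum>k<p. R k * c k)"
  by (intro continuous_intros continuous_on_product_then_coordinatewise continuous_on_id)

lemma Fmin_pos: "1 \<le> p \<Longrightarrow> (\<forall>k<p. 0 < R k) \<Longrightarrow> 0 < Fmin p R"
  by (auto simp: Fmin_def Min_gr_iff lessThan_empty_iff)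

lemma Fmin_le: "k < p \<Longrightarrow> Fmin p R \<le> R k"
  by (auto simp: Fmin_def)

lemma Fmin_cong: "(\<forall>k<p. R k = R' k) \<Longrightarrow> Fmin p R = Fmin p R'"
  unfolding Fmin_def by (metis image_cong lessThan_iff)

lemma exists_max:
  assumes p1: "1 \<le> p" and pos: "\<forall>k<p. 0 < Im (colA \<theta>0 k)" and ne: "Ep p \<theta>0 b \<noteq> {}"
  shows "\<exists>X\<in>Ep p \<theta>0 b. \<forall>Z\<in>Ep p \<theta>0 b. Fmin p Z \<le> Fmin p X"
proof -
  define c where "c = (\<lambda>k. colA \<theta>0 k)"
  define \<delta> where "\<delta> = Min ((\<lambda>k. Im (c k)) ` {..<p})"
  have d0: "0 < \<delta>" using pos p1 by (auto simp: \<delta>_def c_def Min_gr_iff lessThan_empty_iff)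
  have dle: "\<delta> \<le> Im (c k)" if "k < p" for k using that by (auto simp: \<delta>_def)
  define C where "C = Im b / \<delta>"
  have bound: "R k \<le> C" if "\<forall>j<p. 0 \<le> R j" "(\<Sum>j<p. R j * Im (c j)) = Im b" "k < p" for R k
  proof -
    have "R k * \<delta> \<le> R k * Im (c k)" using that dle by (intro mult_left_mono) auto
    also have "\<dots> \<le> (\<Sum>j<p. R j * Im (c j))"
      using that pos
      by (intro member_le_sum[where f="\<lambda>j. R j * Im (c j)"]) (auto simp: c_def less_imp_le)
    finally show ?thesis using that d0 by (simp add: C_def field_simps)
  qed
  define tr where "tr = (\<lambda>R::nat\<Rightarrow>real. \<lambda>k. if k < p then R k else 0)"
  define K where "K = PiE UNIV (\<lambda>k. if k<p then {0..C} else {0::real})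
      \<inter> {R. (\<Sum>k<p. R k * Re (c k)) = Re b} \<inter> {R. (\<Sum>k<p. R k * Im (c k)) = Im b}"
  have "compactin (product_topology (\<lambda>_. euclidean) UNIV) (PiE UNIV (\<lambda>k. if k<p then {0..C} else {0::real}))"
    by (subst compactin_PiE) auto
  then have cK0: "compact (PiE UNIV (\<lambda>k. if k<p then {0..C} else {0::real}))"
    by (simp add: euclidean_product_topology)
  have cK: "compact K" unfolding K_def
    by (intro compact_Int_closed cK0 closed_Collect_eq lin_cont continuous_on_const)
  obtain X0 where X0: "X0 \<in> Ep p \<theta>0 b" using ne by auto
  have trE: "tr R \<in> K" if "R \<in> Ep p \<theta>0 b" for R
  proof -
    have s: "(\<Sum>k<p. tr R k * f k) = (\<Sum>k<p. R k * f k)" for f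
      by (intro sum.cong) (auto simp: tr_def)
    show ?thesis using that bound[of "tr R"]
      by (auto simp: K_def Ep_def s c_def tr_def PiE_iff less_imp_le)
  qed
  have Ftr: "Fmin p (tr R) = Fmin p R" for R by (intro Fmin_cong) (auto simp: tr_def)
  obtain X where XK: "X \<in> K" and Xmax: "\<forall>Y\<in>K. Fmin p Y \<le> Fmin p X"
    using continuous_attains_sup[OF cK _ continuous_on_subset[OF Fmin_cont[OF p1]]] trE[OF X0] by blast
  have "0 < Fmin p X0" using X0 p1 by (intro Fmin_pos) (auto simp: Ep_def)
  also have "\<dots> \<le> Fmin p X" using Xmax trE[OF X0] Ftr by metis
  finally have FX: "0 < Fmin p X" .
  have "X \<in> Ep p \<theta>0 b"
    using XK FX Fmin_le[of _ p X] by (auto simp: K_def Ep_def c_def) (meson less_le_trans)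
  moreover have "\<forall>Z\<in>Ep p \<theta>0 b. Fmin p Z \<le> Fmin p X"
    using Xmax trE Ftr by metis
  ultimately show ?thesis by blast
qed



lemma S_mono:
  assumes "\<forall>k<p. 0 < (R::nat\<Rightarrow>real) k" "j \<le> k" "k \<le> p"
  shows "(\<Sum>i<j. R i) \<le> (\<Sum>i<k. R i)"
  using assms by (intro sum_mono2) (auto simp: less_imp_le)

lemma local_form:
  assumes th: "0 < \<theta>0" and Rpos: "\<forall>k<p. 0 < R k" and k: "k < p"
    and t1: "\<theta>0 * (\<Sum>j<k. R j) < s" and t2: "s < \<theta>0 * (\<Sum>j<Suc k. R j)"
  shows "arcs_frame p \<theta>0 R s =
     ((\<Sum>j\<in>{..<p}-{k}. complex_of_real (R j) * (- \<i>) *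
        (exp (\<i> * of_real (real j * \<theta>0 + (if j < k then \<theta>0 else 0))) - exp (\<i> * of_real (real j * \<theta>0))))
      - complex_of_real (R k) * (- \<i>) * exp (\<i> * of_real (real k * \<theta>0)))
     + complex_of_real (R k) * (- \<i>) * exp (\<i> * of_real (real k * \<theta>0 + (s - \<theta>0 * (\<Sum>j<k. R j)) / R k))"
proof -
  define T where "T j = complex_of_real (R j) * (- \<i>) *
        (exp (\<i> * of_real (real j * \<theta>0
                + max 0 (min \<theta>0 ((s - \<theta>0 * (\<Sum>i<j. R i)) / R j))))
         - exp (\<i> * of_real (real j * \<theta>0)))" for j
  have clip: "max 0 (min \<theta>0 ((s - \<theta>0 * (\<Sum>i<j. R i)) / R j)) = (if j < k then \<theta>0 else 0)"
    if j: "j < p" "j \<noteq> k" for j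
  proof (cases "j < k")
    case True
    have "(\<Sum>i<Suc j. R i) \<le> (\<Sum>i<k. R i)" using True k Rpos by (intro S_mono) auto
    then have "\<theta>0 * (\<Sum>i<Suc j. R i) \<le> \<theta>0 * (\<Sum>i<k. R i)" using th by simp
    then have "\<theta>0 * R j < s - \<theta>0 * (\<Sum>i<j. R i)" using t1 by (simp add: algebra_simps)
    then have "\<theta>0 < (s - \<theta>0 * (\<Sum>i<j. R i)) / R j" using Rpos j by (simp add: pos_less_divide_eq)
    then show ?thesis using True th by simp
  next
    case False
    then have "Suc k \<le> j" using j by auto
    then have "(\<Sum>i<Suc k. R i) \<le> (\<Sum>i<j. R i)" using j Rpos by (intro S_mono) auto
    then have "\<theta>0 * (\<Sum>i<Suc k. R i) \<le> \<theta>0 * (\<Sum>i<j. R i)" using th by simp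
    then have "s - \<theta>0 * (\<Sum>i<j. R i) < 0" using t2 by simp
    then have "(s - \<theta>0 * (\<Sum>i<j. R i)) / R j < 0" using Rpos j by (simp add: divide_neg_pos)
    then show ?thesis using False th by simp
  qed
  have clipk: "max 0 (min \<theta>0 ((s - \<theta>0 * (\<Sum>i<k. R i)) / R k)) = (s - \<theta>0 * (\<Sum>i<k. R i)) / R k"
  proof -
    have "s - \<theta>0 * (\<Sum>i<k. R i) < \<theta>0 * R k" using t2 by (simp add: algebra_simps)
    then have "(s - \<theta>0 * (\<Sum>i<k. R i)) / R k < \<theta>0" using Rpos k by (simp add: pos_divide_less_eq)
    moreover have "0 < (s - \<theta>0 * (\<Sum>i<k. R i)) / R k" using Rpos k t1 by simp
    ultimately show ?thesis by simp
  qed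
  have "arcs_frame p \<theta>0 R s = (\<Sum>j<p. T j)" by (simp add: arcs_frame_def T_def)
  also have "\<dots> = T k + (\<Sum>j\<in>{..<p}-{k}. T j)" using k by (intro sum.remove) auto
  also have "(\<Sum>j\<in>{..<p}-{k}. T j) = (\<Sum>j\<in>{..<p}-{k}. complex_of_real (R j) * (- \<i>) *
        (exp (\<i> * of_real (real j * \<theta>0 + (if j < k then \<theta>0 else 0))) - exp (\<i> * of_real (real j * \<theta>0))))"
    by (intro sum.cong refl) (simp add: T_def clip)
  finally show ?thesis by (simp add: T_def clipk algebra_simps)
qed

lemma second_deriv_arc:
  assumes th: "0 < \<theta>0" and Rpos: "\<forall>k<p. 0 < R k" and k: "k < p"
    and t1: "\<theta>0 * (\<Sum>j<k. R j) < t" and t2: "t < \<theta>0 * (\<Sum>j<Suc k. R j)"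
    and al: "norm \<alpha> = 1"
  shows "norm (vector_derivative (\<lambda>t. vector_derivative (arcs_curve A \<alpha> p \<theta>0 R) (at t)) (at t)) = 1 / R k"
proof -
  define a where "a = \<theta>0 * (\<Sum>j<k. R j)"
  define I where "I = {a <..< \<theta>0 * (\<Sum>j<Suc k. R j)}"
  have oI: "open I" and tI: "t \<in> I" using t1 t2 by (auto simp: I_def a_def)
  define Ck where "Ck = ((\<Sum>j\<in>{..<p}-{k}. complex_of_real (R j) * (- \<i>) *
        (exp (\<i> * of_real (real j * \<theta>0 + (if j < k then \<theta>0 else 0))) - exp (\<i> * of_real (real j * \<theta>0))))
      - complex_of_real (R k) * (- \<i>) * exp (\<i> * of_real (real k * \<theta>0)))"
  define r where "r = R k"
  have r0: "r \<noteq> 0" using Rpos k by (auto simp: r_def)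
  define G where "G z = A + \<alpha> * (Ck + complex_of_real r * (- \<i>) *
      exp (\<i> * (of_real (real k * \<theta>0) + (z - of_real a) * of_real (1 / r))))" for z
  define G1 where "G1 z = \<alpha> * exp (\<i> * (of_real (real k * \<theta>0) + (z - of_real a) * of_real (1 / r)))" for z
  have ceq: "arcs_curve A \<alpha> p \<theta>0 R s = G (of_real s)" if "s \<in> I" for s
    using local_form[OF th Rpos k, of s] that
    by (simp add: I_def a_def arcs_curve_def G_def Ck_def r_def)
  have dG: "(G has_field_derivative G1 z) (at z)" for z
    unfolding G_def G1_def
    apply (rule derivative_eq_intros refl)+ using r0 by (simp add: field_simps)
  have dG1: "(G1 has_field_derivative G1 z * (\<i> / of_real r)) (at z)" for z
    unfolding G1_def
    apply (rule derivative_eq_intros refl)+ using r0 by (simp add: field_simps)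
  have d1: "vector_derivative (arcs_curve A \<alpha> p \<theta>0 R) (at s) = G1 (of_real s)" if "s \<in> I" for s
    by (rule vector_derivative_at, rule has_vector_derivative_transform_within_open[OF
          has_vector_derivative_real_field[OF dG] oI that]) (simp add: ceq)
  have d2: "vector_derivative (\<lambda>t. vector_derivative (arcs_curve A \<alpha> p \<theta>0 R) (at t)) (at t)
       = G1 (of_real t) * (\<i> / of_real r)"
    by (rule vector_derivative_at, rule has_vector_derivative_transform_within_open[OF
          has_vector_derivative_real_field[OF dG1] oI tI]) (simp add: d1)
  have e: "\<i> * (of_real (real k * \<theta>0) + (of_real t - of_real a) * of_real (1 / r))
      = \<i> * complex_of_real (real k * \<theta>0 + (t - a) / r)" by simp
  have "norm (G1 (of_real t) * (\<i> / of_real r)) = 1 / r"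
    unfolding G1_def e using al Rpos k r0 by (simp add: norm_mult norm_divide r_def less_imp_le)
  then show ?thesis by (simp add: d2 r_def)
qed



lemma borel_to_lebon:
  fixes h :: "real \<Rightarrow> real"
  assumes "h \<in> borel_measurable borel"
  shows "h \<in> borel_measurable (lebesgue_on S)"
  by (intro measurable_restrict_space1 measurable_completion) (simp add: assms measurable_lborel1)

lemma meas_mod_finite:
  fixes f g :: "real \<Rightarrow> real"
  assumes "finite N" "g \<in> borel_measurable (lebesgue_on S)"
  shows "(\<lambda>x. if x \<in> N then f x else g x) \<in> borel_measurable (lebesgue_on S)"
  using assms(1)
proof (induction N rule: finite_induct)
  case empty
  then show ?case using assms(2) by simp
next
  case (insert a N)
  define h where "h = (\<lambda>x. if x \<in> N then f x else g x)"
  have "(\<lambda>x. if x \<in> insert a N then f x else g x) = (\<lambda>x. h x + indicator {a} x * (f a - h a))"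
    by (auto simp: h_def indicator_def)
  moreover have "(indicator {a} :: real \<Rightarrow> real) \<in> borel_measurable (lebesgue_on S)"
    by (intro borel_to_lebon) measurable
  ultimately show ?case using insert.IH unfolding h_def[symmetric]
    by (simp add: borel_measurable_add borel_measurable_times)
qed

lemma step_meas:
  fixes a :: "nat \<Rightarrow> real" and c :: "nat \<Rightarrow> real"
  shows "(\<lambda>s. \<Sum>k<p. indicator {a k<..<a (Suc k)} s * c k) \<in> borel_measurable (lebesgue_on S)"
  by (intro borel_to_lebon) measurable



lemma curv_eq:
  assumes th: "0 < \<theta>0" and Rpos: "\<forall>k<p. 0 < R k" and p1: "1 \<le> p" and al: "norm \<alpha> = 1"
  shows "Linf_curv (arcs_len p \<theta>0 R) (arcs_curve A \<alpha> p \<theta>0 R) = ereal (1 / Fmin p R)"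
proof -
  define a where "a j = \<theta>0 * (\<Sum>i<j. R i)" for j
  define m where "m = Fmin p R"
  have m0: "0 < m" using Fmin_pos[OF p1 Rpos] by (simp add: m_def)
  have L: "arcs_len p \<theta>0 R = a p" by (simp add: arcs_len_def a_def)
  have amono: "a j \<le> a k" if "j \<le> k" "k \<le> p" for j k
    using S_mono[OF Rpos that] th by (simp add: a_def)
  have a0: "a 0 = 0" by (simp add: a_def)
  define F where "F s = norm (vector_derivative (\<lambda>t. vector_derivative (arcs_curve A \<alpha> p \<theta>0 R) (at t)) (at s))" for s
  have Fk: "F s = 1 / R k" if "k < p" "a k < s" "s < a (Suc k)" for s k
    unfolding F_def using second_deriv_arc[OF th Rpos that(1), of s \<alpha> A] that al by (simp add: a_def)
  define N where "N = a ` {..p}"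
  have fN: "finite N" by (simp add: N_def)
  have cover: "\<exists>k<p. a k < s \<and> s < a (Suc k)" if s: "s \<in> {0..a p}" "s \<notin> N" for s
  proof -
    define K where "K = {k. k \<le> p \<and> a k \<le> s}"
    have fK: "finite K" by (simp add: K_def)
    have "0 \<in> K" using s a0 by (simp add: K_def)
    define k where "k = Max K"
    have kK: "k \<in> K" using fK \<open>0 \<in> K\<close> unfolding k_def by (intro Max_in) auto
    have kmax: "j \<le> k" if "j \<in> K" for j using fK that by (simp add: k_def)
    have "k \<noteq> p"
    proof
      assume "k = p" then have "a p \<le> s" using kK by (simp add: K_def)
      then have "s = a p" using s by simp
      then show False using s by (simp add: N_def)
    qed
    then have kp: "k < p" using kK by (simp add: K_def)
    have "a k \<noteq> s" using s kp by (auto simp: N_def)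
    then have "a k < s" using kK by (simp add: K_def)
    moreover have "s < a (Suc k)"
    proof (rule ccontr)
      assume "\<not> s < a (Suc k)"
      then have "Suc k \<in> K" using kp by (simp add: K_def)
      then show False using kmax by fastforce
    qed
    ultimately show ?thesis using kp by blast
  qed
  define G where "G s = (\<Sum>k<p. indicator {a k<..<a (Suc k)} s * (1 / R k))" for s
  have GF: "G s = F s" if "k < p" "a k < s" "s < a (Suc k)" for s k
  proof -
    have "G s = (\<Sum>j<p. if j = k then 1 / R k else 0)"
      unfolding G_def
    proof (intro sum.cong refl)
      fix j assume j: "j \<in> {..<p}"
      show "indicator {a j<..<a (Suc j)} s * (1 / R j) = (if j = k then 1 / R k else 0)"
      proof (cases "j = k")
        case False
        then have "j < k \<or> k < j" by auto
        then have "s \<notin> {a j<..<a (Suc j)}"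
        proof
          assume "j < k" then have "a (Suc j) \<le> a k" using that j by (intro amono) auto
          then show ?thesis using that by auto
        next
          assume "k < j" then have "a (Suc k) \<le> a j" using that j by (intro amono) auto
          then show ?thesis using that by auto
        qed
        then show ?thesis using False by simp
      qed (use that in simp)
    qed
    also have "\<dots> = 1 / R k" using that by simp
    finally show ?thesis using Fk[OF that] by simp
  qed
  have measF: "F \<in> borel_measurable (lebesgue_on {0..a p})"
  proof -
    have "(\<lambda>x. if x \<in> N then F x else G x) \<in> borel_measurable (lebesgue_on {0..a p})"
      using meas_mod_finite[OF fN step_meas[where p=p and a=a and c="\<lambda>k. 1 / R k" and S="{0..a p}"], of F] unfolding G_def .
    moreover have "(if x \<in> N then F x else G x) = F x" if "x \<in> {0..a p}" for x
      using cover[OF that] GF by auto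
    ultimately show ?thesis using measurable_lebesgue_cong by (smt (verit))
  qed
  have measf: "(\<lambda>s. ereal (F s)) \<in> borel_measurable (lebesgue_on {0..a p})"
    using measF by measurable
  have AEN: "AE x in lebesgue_on {0..a p}. x \<notin> N"
  proof -
    have "N \<in> null_sets lebesgue" using fN by (simp add: negligible_iff_null_sets[symmetric] negligible_finite)
    then have "AE x in lebesgue. x \<notin> N" by (rule AE_not_in)
    then show ?thesis by (subst AE_restrict_space_iff) (auto elim: eventually_mono)
  qed
  have up: "AE x in lebesgue_on {0..a p}. ereal (F x) \<le> ereal (1 / m)"
  proof (rule AE_mp[OF AEN], rule AE_I2, intro impI)
    fix x assume "x \<in> space (lebesgue_on {0..a p})" "x \<notin> N"
    then obtain k where k: "k < p" "a k < x" "x < a (Suc k)" using cover by auto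
    have "m \<le> R k" using Fmin_le[OF k(1)] by (simp add: m_def)
    then have "1 / R k \<le> 1 / m" using m0 by (simp add: frac_le)
    then show "ereal (F x) \<le> ereal (1 / m)" using Fk[OF k] by simp
  qed
  obtain k0 where k0: "k0 < p" "R k0 = m"
  proof -
    have "m \<in> R ` {..<p}" unfolding m_def Fmin_def using p1 by (intro Min_in) (auto simp: lessThan_empty_iff)
    then show ?thesis using that by auto
  qed
  have low: "ereal (1 / m) \<le> z" if z: "AE x in lebesgue_on {0..a p}. ereal (F x) \<le> z" for z
  proof (rule ccontr)
    assume "\<not> ereal (1 / m) \<le> z"
    then have zl: "z < ereal (1 / m)" by simp
    define I where "I = {a k0<..<a (Suc k0)}"
    have Isub: "I \<subseteq> {0..a p}" using amono[of 0 k0] amono[of "Suc k0" p] k0 a0 by (auto simp: I_def)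
    have "AE x in lebesgue_on {0..a p}. x \<notin> I"
    proof (rule AE_mp[OF z], rule AE_I2, intro impI)
      fix x assume "ereal (F x) \<le> z"
      then show "x \<notin> I" using Fk[OF k0(1)] k0 zl by (auto simp: I_def)
    qed
    then have "AE x in lebesgue. x \<in> {0..a p} \<longrightarrow> x \<notin> I" by (subst (asm) AE_restrict_space_iff) auto
    then have "AE x in lebesgue. x \<notin> I" by (rule eventually_mono) (use Isub in auto)
    then have "I \<in> null_sets lebesgue" by (subst AE_iff_null_sets) (auto simp: I_def)
    then have "I \<in> null_sets lborel" by (subst (asm) null_sets_completion_iff) (auto simp: I_def)
    then have "emeasure lborel I = 0" by auto
    moreover have "a k0 < a (Suc k0)" using Rpos k0 th m0 by (simp add: a_def)
    ultimately show False by (simp add: I_def)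
  qed
  have "Linf_curv (arcs_len p \<theta>0 R) (arcs_curve A \<alpha> p \<theta>0 R) = esssup (lebesgue_on {0..a p}) (\<lambda>s. ereal (F s))"
    by (simp add: Linf_curv_def L F_def)
  also have "\<dots> = Inf {z. AE x in lebesgue_on {0..a p}. ereal (F x) \<le> z}"
    by (rule esssup_eq_AE[OF measf])
  also have "\<dots> = ereal (1 / m)"
    using up low by (intro antisym Inf_lower Inf_greatest) auto
  finally show ?thesis by (simp add: m_def)
qed



theorem theorem5p4:
  fixes Pt_O A B :: complex and p :: nat
  defines "\<alpha> \<equiv> unit_dir A Pt_O"
      and "\<beta> \<equiv> unit_dir Pt_O B"
  defines "\<Omega> \<equiv> Arg (\<beta> / \<alpha>)"
  defines "\<theta>0 \<equiv> \<Omega> / real p"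
  defines "b \<equiv> (B - A) / \<alpha>"
  defines "curv \<equiv> (\<lambda>R. Linf_curv (arcs_len p \<theta>0 R) (arcs_curve A \<alpha> p \<theta>0 R))"
  assumes "Pt_O \<noteq> A" and "A \<noteq> B" and "Pt_O \<noteq> B"
      and "0 < \<Omega>" and "\<Omega> < pi"
      and "2 \<le> p"
      and "Ep p \<theta>0 b \<noteq> {}"
  shows "(\<exists>X\<in>Ep p \<theta>0 b. \<forall>Z\<in>Ep p \<theta>0 b. curv X \<le> curv Z)
       \<and> (\<forall>X\<in>Ep p \<theta>0 b. (\<forall>Z\<in>Ep p \<theta>0 b. curv X \<le> curv Z)
                          \<longleftrightarrow> (\<forall>Z\<in>Ep p \<theta>0 b. Fmin p Z \<le> Fmin p X))
       \<and> (\<exists>X\<in>Ep p \<theta>0 b. \<forall>Z\<in>Ep p \<theta>0 b. Fmin p Z \<le> Fmin p X)"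
proof -
  have p1: "1 \<le> p" using assms by simp
  have al: "norm \<alpha> = 1" using assms(7) by (simp add: \<alpha>_def unit_dir_def norm_divide)
  have th: "0 < \<theta>0" using assms(10,12) by (simp add: \<theta>0_def)
  have pth: "real p * \<theta>0 = \<Omega>" using assms(12) by (simp add: \<theta>0_def)
  have pos: "\<forall>k<p. 0 < Im (colA \<theta>0 k)"
  proof (intro allI impI Im_colA_pos[OF th])
    fix k assume "k < p"
    then have "real (Suc k) * \<theta>0 \<le> real p * \<theta>0" using th by (intro mult_right_mono) auto
    then show "real (Suc k) * \<theta>0 < pi" using pth assms(11) by simp
  qed
  have cv: "curv R = ereal (1 / Fmin p R)" if "R \<in> Ep p \<theta>0 b" for R
    unfolding curv_def using that by (intro curv_eq[OF th _ p1 al]) (auto simp: Ep_def)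
  have Fp: "0 < Fmin p R" if "R \<in> Ep p \<theta>0 b" for R
    using that by (intro Fmin_pos[OF p1]) (auto simp: Ep_def)
  have inv: "1 / x \<le> 1 / y \<longleftrightarrow> y \<le> x" if "0 < x" "0 < (y::real)" for x y
    using that by (simp add: field_simps)
  have eqv: "curv X \<le> curv Z \<longleftrightarrow> Fmin p Z \<le> Fmin p X" if "X \<in> Ep p \<theta>0 b" "Z \<in> Ep p \<theta>0 b" for X Z
    using cv[OF that(1)] cv[OF that(2)] Fp[OF that(1)] Fp[OF that(2)] inv by simp
  have part2: "\<forall>X\<in>Ep p \<theta>0 b. (\<forall>Z\<in>Ep p \<theta>0 b. curv X \<le> curv Z)
                          \<longleftrightarrow> (\<forall>Z\<in>Ep p \<theta>0 b. Fmin p Z \<le> Fmin p X)"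
    using eqv by blast
  have part3: "\<exists>X\<in>Ep p \<theta>0 b. \<forall>Z\<in>Ep p \<theta>0 b. Fmin p Z \<le> Fmin p X"
    by (rule exists_max[OF p1 pos assms(13)])
  show ?thesis using part2 part3 by blast
qed


end
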